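(* Every CUNC ring is an NCUC ring.
   Context: All rings are associative with identity $1$. For a ring $R$, $\mathrm{Id}(R)$, $U(R)$, $\mathrm{Nil}(R)$ denote the sets of idempotents, units and nilpotent elements. An element $a\in R$ is clean if $a=e+u$ for some $e\in\mathrm{Id}(R)$, $u\in U(R)$, and uniquely clean if there is exactly one $e\in \mathrm{Id}(R)$ with $a-e\in U(R)$. An element $a$ is nil-clean if $a=e+q$ with $e\in \mathrm{Id}(R)$, $q\in\mathrm{Nil}(R)$, and uniquely nil-clean if there is exactly one $e\in\mathrm{Id}(R)$ with $a-e\in\mathrm{Nil}(R)$. $R$ is CUNC if every clean element of $R$ is uniquely nil-clean, and NCUC if every nil-clean element of $R$ is uniquely clean. *)

theory Defs
  imports Main
begin

definition idempotents :: "'a::ring_1 set" where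
  "idempotents = {e. e * e = e}"

definition units_of_ring :: "'a::ring_1 set" where
  "units_of_ring = {u. \<exists>v. u * v = 1 \<and> v * u = 1}"

definition nilpotents :: "'a::ring_1 set" where
  "nilpotents = {q. \<exists>n::nat. q ^ n = 0}"

definition clean :: "'a::ring_1 \<Rightarrow> bool" where
  "clean a \<longleftrightarrow> (\<exists>e u. e \<in> idempotents \<and> u \<in> units_of_ring \<and> a = e + u)"

definition uniquely_clean :: "'a::ring_1 \<Rightarrow> bool" where
  "uniquely_clean a \<longleftrightarrow> (\<exists>!e. e \<in> idempotents \<and> a - e \<in> units_of_ring)"

definition nil_clean :: "'a::ring_1 \<Rightarrow> bool" where
  "nil_clean a \<longleftrightarrow> (\<exists>e q. e \<in> idempotents \<and> q \<in> nilpotents \<and> a = e + q)"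

definition uniquely_nil_clean :: "'a::ring_1 \<Rightarrow> bool" where
  "uniquely_nil_clean a \<longleftrightarrow> (\<exists>!e. e \<in> idempotents \<and> a - e \<in> nilpotents)"

definition CUNC :: "'a::ring_1 itself \<Rightarrow> bool" where
  "CUNC _ \<longleftrightarrow> (\<forall>a::'a. clean a \<longrightarrow> uniquely_nil_clean a)"

definition NCUC :: "'a::ring_1 itself \<Rightarrow> bool" where
  "NCUC _ \<longleftrightarrow> (\<forall>a::'a. nil_clean a \<longrightarrow> uniquely_clean a)"

end

theory Submission
  imports Defs
begin

lemma central_pow:
  fixes c t :: "'a::ring_1"
  assumes "\<And>z. c * z = z * c"
  shows "(c * t) ^ k = c ^ k * t ^ k"
proof (induct k)
  case 0 then show ?case by simp
next
  case (Suc k)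
  have "(c * t) ^ Suc k = (c * t) ^ k * (c * t)" by (rule power_Suc2)
  also have "\<dots> = c ^ k * t ^ k * (c * t)" by (simp only: Suc)
  also have "\<dots> = c ^ k * (t ^ k * c) * t" by (simp only: mult.assoc)
  also have "\<dots> = c ^ k * (c * t ^ k) * t" by (simp only: assms)
  also have "\<dots> = (c ^ k * c) * (t ^ k * t)" by (simp only: mult.assoc)
  also have "\<dots> = c ^ Suc k * t ^ Suc k" by (simp only: power_Suc2)
  finally show ?case .
qed

lemma sum_form:
  fixes x c :: "'a::ring_1"
  assumes "\<And>z. c * z = z * c"
  shows "\<exists>t. (x + c) ^ n = x ^ n + c * t"
proof (induct n)
  case 0 show ?case by (rule exI[of _ 0]) simp
next
  case (Suc n)
  then obtain t where t: "(x + c) ^ n = x ^ n + c * t" by blast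
  have "(x + c) ^ Suc n = (x + c) ^ n * (x + c)" by (rule power_Suc2)
  also have "\<dots> = (x ^ n + c * t) * (x + c)" by (simp only: t)
  also have "\<dots> = x ^ Suc n + c * (x ^ n + t * (x + c))"
    by (simp add: distrib_left distrib_right power_Suc2 assms[of "x ^ n", symmetric] mult.assoc add.assoc del: power_Suc)
  finally show ?case by blast
qed

lemma nil_sum:
  fixes x c :: "'a::ring_1"
  assumes "\<And>z. c * z = z * c" "x ^ m = 0" "c ^ k = 0"
  shows "(x + c) ^ (m * k) = 0"
proof -
  obtain t where t: "(x + c) ^ m = x ^ m + c * t" using sum_form[OF assms(1)] by blast
  have "(x + c) ^ (m * k) = ((x + c) ^ m) ^ k" by (simp add: power_mult)
  also have "\<dots> = (c * t) ^ k" using t assms(2) by simp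
  also have "\<dots> = c ^ k * t ^ k" by (rule central_pow[OF assms(1)])
  finally show ?thesis using assms by simp
qed

lemma geom:
  fixes x :: "'a::ring_1"
  shows "(1 - x) * (\<Sum>i<k. x ^ i) = 1 - x ^ k \<and> (\<Sum>i<k. x ^ i) * (1 - x) = 1 - x ^ k"
proof (induct k)
  case 0 then show ?case by simp
next
  case (Suc k)
  have a: "(1 - x) * (\<Sum>i<Suc k. x ^ i) = (1 - x) * (\<Sum>i<k. x ^ i) + (1 - x) * x ^ k"
    by (simp add: distrib_left)
  have b: "(\<Sum>i<Suc k. x ^ i) * (1 - x) = (\<Sum>i<k. x ^ i) * (1 - x) + x ^ k * (1 - x)"
    by (simp add: distrib_right)
  have c: "x ^ Suc k = x * x ^ k" "x ^ Suc k = x ^ k * x" by (rule power_Suc, rule power_Suc2)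
  have "(1 - x) * (\<Sum>i<Suc k. x ^ i) = (1 - x ^ k) + (1 - x) * x ^ k" using a Suc by simp
  also have "\<dots> = 1 - x ^ Suc k" using c(1) by (simp add: algebra_simps)
  finally have g1: "(1 - x) * (\<Sum>i<Suc k. x ^ i) = 1 - x ^ Suc k" .
  have "(\<Sum>i<Suc k. x ^ i) * (1 - x) = (1 - x ^ k) + x ^ k * (1 - x)" using b Suc by simp
  also have "\<dots> = 1 - x ^ Suc k" using c(2) by (simp add: algebra_simps)
  finally show ?case using g1 by simp
qed

lemma one_plus_nil_unit:
  fixes n :: "'a::ring_1"
  assumes "n ^ k = 0"
  shows "1 + n \<in> units_of_ring"
proof -
  have "(- n) ^ k = 0" using assms by (simp add: power_minus[of n])
  then show ?thesis using geom[of "-n" k] unfolding units_of_ring_def by auto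
qed

lemma units_pow:
  fixes u v :: "'a::ring_1"
  assumes "u * v = 1"
  shows "u ^ k * v ^ k = 1"
proof (induct k)
  case 0 then show ?case by simp
next
  case (Suc k)
  have "u ^ Suc k * v ^ Suc k = (u * u ^ k) * (v ^ k * v)"
    by (simp only: power_Suc[of u] power_Suc2[of v])
  also have "\<dots> = u * (u ^ k * v ^ k) * v" by (simp only: mult.assoc)
  finally have "u ^ Suc k * v ^ Suc k = u * (u ^ k * v ^ k) * v" .
  then show ?case using Suc assms by simp
qed

theorem mainTheorem14:
  assumes "CUNC TYPE('a::ring_1)"
  shows "NCUC TYPE('a)"
proof -
  have A: "\<And>a::'a. clean a \<Longrightarrow> uniquely_nil_clean a"
    using assms unfolding CUNC_def by blast
  have nil0: "(0::'a) \<in> nilpotents" using power_one_right[of "0::'a"] unfolding nilpotents_def by blast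
  have central: "e * r = r * e" if e: "e \<in> idempotents" for e r :: 'a
  proof -
    have ee: "e * e = e" using e by (simp add: idempotents_def)
    have cl: "clean e"
      unfolding clean_def
    proof (intro exI conjI)
      show "1 - e \<in> idempotents" using ee by (simp add: idempotents_def algebra_simps)
      have "(2 * e - 1) * (2 * e - 1) = 1" by (simp add: algebra_simps ee mult_2 mult_2_right)
      then show "2 * e - 1 \<in> units_of_ring" unfolding units_of_ring_def by blast
      show "e = 1 - e + (2 * e - 1)" by (simp add: algebra_simps mult_2)
    qed
    have U: "\<And>f. f \<in> idempotents \<Longrightarrow> e - f \<in> nilpotents \<Longrightarrow> f = e"
    proof -
      fix f assume f: "f \<in> idempotents" "e - f \<in> nilpotents"
      from A[OF cl] obtain g where G: "\<And>h. h \<in> idempotents \<and> e - h \<in> nilpotents \<Longrightarrow> h = g"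
        unfolding uniquely_nil_clean_def by blast
      have ee0: "e - e \<in> nilpotents" using nil0 by simp
      have "f = g" by (rule G, rule conjI, rule f(1), rule f(2))
      moreover have "e = g" by (rule G, rule conjI, rule e, rule ee0)
      ultimately have "f = g" "e = g" by simp_all
      then show "f = e" by simp
    qed
    define x where "x = e * r * (1 - e)"
    define y where "y = (1 - e) * r * e"
    have ee2: "e * (e * z) = e * z" for z using ee by (simp add: mult.assoc[symmetric])
    have ex1: "e * x = x" unfolding x_def by (simp add: algebra_simps ee ee2)
    have ex2: "x * e = 0" unfolding x_def by (simp add: algebra_simps ee ee2)
    have "x * x = x * (e * x)" by (simp only: ex1)
    also have "\<dots> = (x * e) * x" by (simp only: mult.assoc)
    finally have ex3: "x * x = 0" using ex2 by simp
    note ex = ex1 ex2 ex3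
    have ey1: "y * e = y" unfolding y_def by (simp add: algebra_simps ee ee2)
    have ey2: "e * y = 0" unfolding y_def by (simp add: algebra_simps ee ee2)
    have "y * y = (y * e) * y" by (simp only: ey1)
    also have "\<dots> = y * (e * y)" by (simp only: mult.assoc)
    finally have ey3: "y * y = 0" using ey2 by simp
    note ey = ey1 ey2 ey3
    have "e + x = e"
    proof (rule U)
      show "e + x \<in> idempotents" using ex ee by (simp add: idempotents_def algebra_simps)
      have "(e - (e + x)) ^ 2 = 0" by (simp add: power2_eq_square ex)
      then show "e - (e + x) \<in> nilpotents" unfolding nilpotents_def by blast
    qed
    then have x0: "x = 0" by simp
    have "e + y = e"
    proof (rule U)
      show "e + y \<in> idempotents" using ey ee by (simp add: idempotents_def algebra_simps)
      have "(e - (e + y)) ^ 2 = 0" by (simp add: power2_eq_square ey)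
      then show "e - (e + y) \<in> nilpotents" unfolding nilpotents_def by blast
    qed
    then have y0: "y = 0" by simp
    from x0 have "e * r = e * r * e" unfolding x_def by (simp add: algebra_simps ee)
    moreover from y0 have "r * e = e * r * e" unfolding y_def by (simp add: algebra_simps ee)
    ultimately show ?thesis by simp
  qed
  have unip: "\<exists>k. (u - 1) ^ k = 0" if u: "u \<in> units_of_ring" for u :: 'a
  proof -
    obtain v where uv: "u * v = 1" "v * u = 1" using u unfolding units_of_ring_def by blast
    have cl: "clean u" unfolding clean_def
      by (rule exI[of _ 0], rule exI[of _ u]) (simp add: u idempotents_def)
    from A[OF cl] obtain e where e: "e \<in> idempotents" "u - e \<in> nilpotents"
      unfolding uniquely_nil_clean_def by blast
    obtain k where k: "(u - e) ^ k = 0" using e(2) unfolding nilpotents_def by blast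
    have ee: "e * e = e" using e by (simp add: idempotents_def)
    define c where "c = 1 - e"
    have cc: "c * z = z * c" for z
    proof -
      have "e * z = z * e" by (rule central[OF e(1)])
      then show ?thesis unfolding c_def by (simp add: left_diff_distrib right_diff_distrib)
    qed
    have "c * u = c * (u - e)" unfolding c_def by (simp add: algebra_simps ee)
    moreover have "(c * (u - e)) ^ k = 0" using k by (simp only: central_pow[OF cc] mult_zero_right)
    ultimately have "(c * u) ^ k = 0" by simp
    then have "c ^ k * u ^ k = 0" by (simp only: central_pow[OF cc])
    then have "c ^ k * u ^ k * v ^ k = 0" by simp
    then have ck: "c ^ k = 0" using units_pow[OF uv(1), of k] by (simp add: mult.assoc)
    have "c * c = c" unfolding c_def by (simp add: algebra_simps ee)
    then have cp: "c ^ Suc n = c" for n by (induct n) (simp_all add: power_Suc2 mult.assoc)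
    have "c = 0"
    proof (cases k)
      case 0 then have "(1::'a) = 0" using ck by simp
      then show ?thesis by (metis mult_1 mult_zero_left)
    next
      case (Suc n) then show ?thesis using ck cp by simp
    qed
    then have "e = 1" unfolding c_def by simp
    then show ?thesis using k by blast
  qed
  obtain k2 where k2: "(2::'a) ^ k2 = 0"
  proof -
    have "(-1::'a) * (-1) = 1" by simp
    then have "(-1::'a) \<in> units_of_ring" unfolding units_of_ring_def by blast
    then obtain k where "(-1 - 1 :: 'a) ^ k = 0" using unip by blast
    then have "(- 2 :: 'a) ^ k = 0" by simp
    then have h: "(-1) ^ k * (2::'a) ^ k = 0" by (simp add: power_minus[of "2::'a"])
    have "((-1::'a) * (-1)) ^ k = (-1) ^ k * (-1) ^ k" by (rule central_pow) simp
    then have "(-1::'a) ^ k * (-1) ^ k = 1" by simp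
    then have "(2::'a) ^ k = (-1) ^ k * ((-1) ^ k * 2 ^ k)" by (simp add: mult.assoc[symmetric])
    then have "(2::'a) ^ k = 0" using h by simp
    then show ?thesis using that by blast
  qed
  have two_c: "\<And>z::'a. 2 * z = z * 2" by (simp add: mult_2 mult_2_right)
  have c2: "((2::'a) * f) ^ k2 = 0" for f
  proof -
    have "((2::'a) * f) ^ k2 = 2 ^ k2 * f ^ k2" by (rule central_pow[OF two_c])
    then show ?thesis using k2 by simp
  qed
  have c2c: "(\<And>z. f * z = z * f) \<Longrightarrow> (\<And>z. ((2::'a) * f) * z = z * (2 * f))" for f
    by (metis mult.assoc two_c)
  show ?thesis unfolding NCUC_def
  proof (intro allI impI)
    fix a :: 'a assume "nil_clean a"
    then obtain e q where e: "e \<in> idempotents" "q \<in> nilpotents" "a = e + q"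
      unfolding nil_clean_def by blast
    obtain m where m: "q ^ m = 0" using e(2) unfolding nilpotents_def by blast
    have ce: "(e - 1) * z = z * (e - 1)" for z
    proof -
      have "e * z = z * e" by (rule central[OF e(1)])
      then show ?thesis by (simp add: left_diff_distrib right_diff_distrib)
    qed
    have "(q + 2 * (e - 1)) ^ (m * k2) = 0"
      by (rule nil_sum[OF c2c[OF ce] m c2])
    then have "1 + (q + 2 * (e - 1)) \<in> units_of_ring" by (rule one_plus_nil_unit)
    moreover have "1 + (q + 2 * (e - 1)) = a - (1 - e)" using e(3) by (simp add: algebra_simps mult_2)
    ultimately have ex: "a - (1 - e) \<in> units_of_ring" by simp
    have e1: "1 - e \<in> idempotents" using e(1) by (simp add: idempotents_def algebra_simps)
    have cl: "clean a" unfolding clean_def using ex e1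
      by (intro exI[of _ "1 - e"] exI[of _ "a - (1 - e)"]) simp
    from A[OF cl] obtain g where g: "\<And>h. h \<in> idempotents \<and> a - h \<in> nilpotents \<Longrightarrow> h = g"
      unfolding uniquely_nil_clean_def by blast
    have key: "1 - f = g" if f: "f \<in> idempotents" "a - f \<in> units_of_ring" for f
    proof -
      obtain n where n: "(a - f - 1) ^ n = 0" using unip[OF f(2)] by blast
      have cf: "f * z = z * f" for z by (rule central[OF f(1)])
      have "(a - f - 1 + 2 * f) ^ (n * k2) = 0"
        by (rule nil_sum[OF c2c[OF cf] n c2])
      moreover have "a - f - 1 + 2 * f = a - (1 - f)" by (simp add: algebra_simps mult_2)
      ultimately have "(a - (1 - f)) ^ (n * k2) = 0" by simp
      then have "a - (1 - f) \<in> nilpotents" unfolding nilpotents_def by blast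
      moreover have "1 - f \<in> idempotents" using f(1) by (simp add: idempotents_def algebra_simps)
      ultimately show ?thesis by (intro g conjI)
    qed
    show "uniquely_clean a" unfolding uniquely_clean_def
    proof (rule ex1I[of _ "1 - e"])
      show "1 - e \<in> idempotents \<and> a - (1 - e) \<in> units_of_ring" using e1 ex by simp
    next
      fix f assume f: "f \<in> idempotents \<and> a - f \<in> units_of_ring"
      have "1 - f = g" using f by (intro key) simp_all
      moreover have "1 - (1 - e) = g" using e1 ex by (intro key) simp_all
      ultimately have "1 - f = e" by simp
      then have "1 - (1 - f) = 1 - e" by simp
      then show "f = 1 - e" by simp
    qed
  qed
qed

end
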